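(* In any run of the MT algorithm, if $t_1<t_2$ are two resampling times, then the witness trees satisfy $\hat\tau^{t_1}\neq\hat\tau^{t_2}$.
   Context: Variable-assignment setting: variables $X_1,\dots,X_n$ with finite value sets, independent under product distribution $\Omega$. A bad-event is a finite set $B$ of pairs $(i,j)$ with distinct first coordinates (the event $\bigwedge_{(i,j)\in B}X_i=j$); $\mathcal B$ is a finite set of bad-events. $(i,j)\sim(i',j')$ iff $i=i'$, $j\ne j'$; $z\sim B$ iff some $z'\in B$ has $z\sim z'$; $i\sim B$ iff $(i,j)\in B$ for some $j$. $Y\subseteq\mathcal B$ is orderable to $E$ if $Y=\{E\}$ or $Y=\{B_1,\dots,B_s\}$ (distinct) can be ordered so that each $i$ has $z_i\in E$ with $z_i\sim B_i$ and $z_i\not\sim B_1,\dots,B_{i-1}$. MT algorithm: draw all variables from $\Omega$; while some bad-event is true, choose a true one $B$ and resample all $X_i$, $i\sim B$, from $\Omega$. Witness trees: with execution log $B_1,\dots,B_T$ (the resampled bad-events in order), $\hat\tau^t$ is built by starting with a root labeled $B_t$ and processing $B_{t-1},\dots,B_1$: a bad-event $B'$ is eligible for a node $v$ labeled $B$ whose children have distinct labels $C_1,\dots,C_r$ if $B'\notin\{C_1,\dots,C_r\}$ and $\{C_1,\dots,C_r,B'\}$ is orderable to $B$; if $B_{t'}$ is eligible for some node, it is added as a child of a deepest eligible node (ties broken arbitrarily), otherwise discarded. Trees are compared as rooted labeled trees. *)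

theory Defs
  imports "HOL-Probability.Probability_Mass_Function"
begin

text \<open>Variables have type 'v (finitely many), values type 'a. A bad-event is a set of
  pairs (i,j) meaning X_i = j.\<close>

definition zsim :: "'v \<times> 'a \<Rightarrow> 'v \<times> 'a \<Rightarrow> bool" where
  "zsim z z' \<longleftrightarrow> fst z = fst z' \<and> snd z \<noteq> snd z'"

definition zsim_ev :: "'v \<times> 'a \<Rightarrow> ('v \<times> 'a) set \<Rightarrow> bool" where
  "zsim_ev z B \<longleftrightarrow> (\<exists>z'\<in>B. zsim z z')"

definition var_in :: "'v \<Rightarrow> ('v \<times> 'a) set \<Rightarrow> bool" where
  "var_in i B \<longleftrightarrow> (\<exists>j. (i, j) \<in> B)"

definition is_bad_event :: "('v \<times> 'a) set \<Rightarrow> bool" where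
  "is_bad_event B \<longleftrightarrow> finite B \<and> inj_on fst B"

definition orderable :: "('v \<times> 'a) set set \<Rightarrow> ('v \<times> 'a) set \<Rightarrow> bool" where
  "orderable Y E \<longleftrightarrow> Y = {E} \<or>
     (\<exists>bs. distinct bs \<and> set bs = Y \<and>
        (\<forall>i < length bs. \<exists>z\<in>E. zsim_ev z (bs ! i) \<and> (\<forall>k < i. \<not> zsim_ev z (bs ! k))))"

text \<open>A possible (finite prefix of a) run of the MT algorithm with T resampling steps:
  asg t is the assignment after the t-th resampling (asg 0 the initial one),
  evlog t (1 \<le> t \<le> T) is the bad-event resampled at step t.\<close>
definition mt_run ::
  "('v \<Rightarrow> 'a pmf) \<Rightarrow> ('v \<times> 'a) set set \<Rightarrow> (nat \<Rightarrow> 'v \<Rightarrow> 'a) \<Rightarrow> (nat \<Rightarrow> ('v \<times> 'a) set) \<Rightarrow> nat \<Rightarrow> bool"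
where
  "mt_run \<Omega> \<B> asg evlog T \<longleftrightarrow>
     (\<forall>t \<le> T. \<forall>i. asg t i \<in> set_pmf (\<Omega> i)) \<and>
     (\<forall>t \<in> {1..T}. evlog t \<in> \<B> \<and>
        (\<forall>(i, j) \<in> evlog t. asg (t - 1) i = j) \<and>
        (\<forall>i. \<not> var_in i (evlog t) \<longrightarrow> asg t i = asg (t - 1) i))"

text \<open>Nodes of the tree for time t are identified by the
  evlog positions that created them (root = t); a tree is given by its parent map
  (a partial map whose domain is the set of non-root nodes); node u is labeled evlog u.
  dep records depths.\<close>
definition wt_children :: "(nat \<Rightarrow> ('v \<times> 'a) set) \<Rightarrow> (nat \<rightharpoonup> nat) \<Rightarrow> nat \<Rightarrow> ('v \<times> 'a) set set" where
  "wt_children evlog par v = evlog ` {u \<in> dom par. par u = Some v}"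

definition wt_eligible :: "(nat \<Rightarrow> ('v \<times> 'a) set) \<Rightarrow> nat \<Rightarrow> (nat \<rightharpoonup> nat) \<Rightarrow> nat \<Rightarrow> nat \<Rightarrow> bool" where
  "wt_eligible evlog t par k v \<longleftrightarrow> v \<in> insert t (dom par) \<and>
     evlog k \<notin> wt_children evlog par v \<and>
     orderable (insert (evlog k) (wt_children evlog par v)) (evlog v)"

text \<open>wt_proc evlog t k par dep: state after processing evlog entries t-1, ..., k.\<close>
inductive wt_proc :: "(nat \<Rightarrow> ('v \<times> 'a) set) \<Rightarrow> nat \<Rightarrow> nat \<Rightarrow> (nat \<rightharpoonup> nat) \<Rightarrow> (nat \<Rightarrow> nat) \<Rightarrow> bool"
  for evlog t where
  init: "wt_proc evlog t t Map.empty (\<lambda>_. 0)"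
| add: "\<lbrakk> wt_proc evlog t (Suc k) par dep; 1 \<le> k; wt_eligible evlog t par k v;
         \<forall>w. wt_eligible evlog t par k w \<longrightarrow> dep w \<le> dep v \<rbrakk>
       \<Longrightarrow> wt_proc evlog t k (par(k \<mapsto> v)) (dep(k := Suc (dep v)))"
| discard: "\<lbrakk> wt_proc evlog t (Suc k) par dep; 1 \<le> k; \<forall>w. \<not> wt_eligible evlog t par k w \<rbrakk>
       \<Longrightarrow> wt_proc evlog t k par dep"

text \<open>par is a possible witness tree \<tau>^t (any tie-breaking), rooted at t.\<close>
definition witness_tree :: "(nat \<Rightarrow> ('v \<times> 'a) set) \<Rightarrow> nat \<Rightarrow> (nat \<rightharpoonup> nat) \<Rightarrow> bool" where
  "witness_tree evlog t par \<longleftrightarrow> (\<exists>dep. wt_proc evlog t 1 par dep)"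

text \<open>Equality as rooted labeled trees: isomorphism preserving root, parents and labels.\<close>
definition wt_iso :: "(nat \<Rightarrow> ('v \<times> 'a) set) \<Rightarrow> nat \<Rightarrow> (nat \<rightharpoonup> nat) \<Rightarrow> nat \<Rightarrow> (nat \<rightharpoonup> nat) \<Rightarrow> bool" where
  "wt_iso evlog r1 par1 r2 par2 \<longleftrightarrow>
     (\<exists>f. bij_betw f (insert r1 (dom par1)) (insert r2 (dom par2)) \<and> f r1 = r2 \<and>
          (\<forall>u \<in> insert r1 (dom par1). evlog (f u) = evlog u) \<and>
          (\<forall>u \<in> dom par1. par2 (f u) = map_option f (par1 u)))"

end

theory Submission
  imports Defs
begin

lemma wt_inv:
  assumes "wt_proc evlog t k par dep"
  shows "k \<le> t \<and> dom par \<subseteq> {k..<t} \<and> dep t = 0 \<and>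
    (\<forall>u w. par u = Some w \<longrightarrow> w \<in> insert t (dom par) \<and> u < w \<and> dep u = Suc (dep w))"
  using assms
proof (induction rule: wt_proc.induct)
  case init
  then show ?case by auto
next
  case (add k par dep v)
  have v: "v \<in> insert t (dom par)" using add.hyps(3) unfolding wt_eligible_def by blast
  have kv: "k < v" using v add.IH by auto
  have A: "\<forall>u w. (par(k \<mapsto> v)) u = Some w \<longrightarrow> w \<in> insert t (dom (par(k \<mapsto> v))) \<and> u < w \<and> (dep(k := Suc (dep v))) u = Suc ((dep(k := Suc (dep v))) w)"
  proof (intro allI impI)
    fix u w assume h: "(par(k \<mapsto> v)) u = Some w"
    show "w \<in> insert t (dom (par(k \<mapsto> v))) \<and> u < w \<and> (dep(k := Suc (dep v))) u = Suc ((dep(k := Suc (dep v))) w)"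
    proof (cases "u = k")
      case True
      then show ?thesis using h v kv by auto
    next
      case False
      then have pu: "par u = Some w" using h by auto
      then have "u \<in> dom par" by auto
      then have "Suc k \<le> u" using add.IH by auto
      then have "u < w" "w \<in> insert t (dom par)" "dep u = Suc (dep w)" using pu add.IH by auto
      then show ?thesis using False \<open>Suc k \<le> u\<close> by auto
    qed
  qed
  have B: "dom (par(k \<mapsto> v)) \<subseteq> {k..<t}" using add.IH by auto
  have C: "(dep(k := Suc (dep v))) t = 0" using add.IH by auto
  have D: "k \<le> t" using add.IH by auto
  from A B C D show ?case by blast
next
  case (discard k par dep)
  then show ?case by auto
qed

lemma key:
  assumes "wt_proc evlog t k par dep"
  shows "k \<le> u \<Longrightarrow> u < v \<Longrightarrow> v \<in> insert t (dom par) \<Longrightarrow> evlog u = evlog v \<Longrightarrow>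
    (\<forall>c. par c = Some v \<longrightarrow> c < u) \<Longrightarrow> u \<in> dom par \<and> dep v < dep u"
  using assms
proof (induction arbitrary: u v rule: wt_proc.induct)
  case init
  then show ?case by auto
next
  case (add k par dep w u v)
  have inv: "Suc k \<le> t \<and> dom par \<subseteq> {Suc k..<t}" using wt_inv[OF add.hyps(1)] by auto
  show ?case
  proof (cases "u = k")
    case False
    then have "Suc k \<le> u" using add.prems by auto
    moreover have "v \<in> insert t (dom par)" using add.prems False by auto
    moreover have "\<forall>c. par c = Some v \<longrightarrow> c < u"
    proof (intro allI impI)
      fix c assume "par c = Some v"
      then have "c \<in> dom par" by auto
      then have "c \<noteq> k" using inv by auto
      then have "(par(k \<mapsto> w)) c = Some v" using \<open>par c = Some v\<close> by auto
      then show "c < u" using add.prems(5) by blast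
    qed
    ultimately have "u \<in> dom par \<and> dep v < dep u" using add.IH add.prems by blast
    moreover have "v \<noteq> k" using add.prems False by auto
    ultimately show ?thesis using False by auto
  next
    case True
    have vk: "v \<noteq> k" using add.prems True by auto
    have vin: "v \<in> insert t (dom par)" using add.prems vk by auto
    have nochild: "wt_children evlog par v = {}"
    proof -
      have "\<forall>c. par c = Some v \<longrightarrow> False"
      proof (intro allI impI)
        fix c assume "par c = Some v"
        then have "c \<in> dom par" "c \<noteq> k" using inv by auto
        then have "c \<ge> Suc k" using inv by auto
        moreover have "c < u" using add.prems(5) \<open>par c = Some v\<close> \<open>c \<noteq> k\<close> by auto
        ultimately show False using True by auto
      qed
      then show ?thesis unfolding wt_children_def by auto
    qed
    have "wt_eligible evlog t par k v"
      unfolding wt_eligible_def using vin nochild True add.prems(4) orderable_def by auto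
    then have "dep v \<le> dep w" using add.hyps(4) by blast
    then show ?thesis using True vk by auto
  qed
next
  case (discard k par dep u v)
  have inv: "Suc k \<le> t \<and> dom par \<subseteq> {Suc k..<t}" using wt_inv[OF discard.hyps(1)] by auto
  show ?case
  proof (cases "u = k")
    case False
    then show ?thesis using discard by auto
  next
    case True
    have nochild: "wt_children evlog par v = {}"
    proof -
      have "\<forall>c. par c = Some v \<longrightarrow> False"
      proof (intro allI impI)
        fix c assume "par c = Some v"
        then have "c \<in> dom par" using inv by auto
        then have "c \<ge> Suc k" using inv by auto
        moreover have "c < u" using discard.prems(5) \<open>par c = Some v\<close> by auto
        ultimately show False using True by auto
      qed
      then show ?thesis unfolding wt_children_def by auto
    qed
    have "wt_eligible evlog t par k v"
      unfolding wt_eligible_def using discard.prems(3) nochild True discard.prems(4) orderable_def by auto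
    then show ?thesis using discard.hyps(3) by blast
  qed
qed


lemma iso_dep:
  assumes d1: "dep1 t1 = 0" and p1: "\<forall>u w. par1 u = Some w \<longrightarrow> dep1 u = Suc (dep1 w) \<and> w \<in> insert t1 (dom par1)"
    and d2: "dep2 t2 = 0" and p2: "\<forall>u w. par2 u = Some w \<longrightarrow> dep2 u = Suc (dep2 w)"
    and ft: "f t1 = t2" and fp: "\<forall>u \<in> dom par1. par2 (f u) = map_option f (par1 u)"
  shows "u \<in> insert t1 (dom par1) \<Longrightarrow> dep2 (f u) = dep1 u"
proof (induction "dep1 u" arbitrary: u)
  case 0
  then have "u = t1" using p1 by (metis domD insertE nat.distinct(1))
  then show ?case using d1 d2 ft by simp
next
  case (Suc n)
  then have "u \<noteq> t1" using d1 by auto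
  then have "u \<in> dom par1" using Suc.prems by auto
  then obtain w where w: "par1 u = Some w" by auto
  have "dep1 u = Suc (dep1 w)" "w \<in> insert t1 (dom par1)" using p1 w by auto
  then have "dep2 (f w) = dep1 w" using Suc by auto
  moreover have "par2 (f u) = Some (f w)" using fp \<open>u \<in> dom par1\<close> w by auto
  ultimately show ?case using p2 \<open>dep1 u = Suc (dep1 w)\<close> by auto
qed

theorem proposition2p7:
  fixes \<Omega> :: "'v::finite \<Rightarrow> 'a pmf" and D :: "'v \<Rightarrow> 'a set"
    and \<B> :: "('v \<times> 'a) set set"
    and asg :: "nat \<Rightarrow> 'v \<Rightarrow> 'a" and evlog :: "nat \<Rightarrow> ('v \<times> 'a) set"
  assumes "\<forall>i. finite (D i) \<and> set_pmf (\<Omega> i) \<subseteq> D i"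
    and "finite \<B>" and "\<forall>B\<in>\<B>. is_bad_event B \<and> (\<forall>(i, j)\<in>B. j \<in> D i)"
    and "mt_run \<Omega> \<B> asg evlog T"
    and "1 \<le> t1" and "t1 < t2" and "t2 \<le> T"
    and "witness_tree evlog t1 par1" and "witness_tree evlog t2 par2"
  shows "\<not> wt_iso evlog t1 par1 t2 par2"
proof
  assume "wt_iso evlog t1 par1 t2 par2"
  then obtain f where bij: "bij_betw f (insert t1 (dom par1)) (insert t2 (dom par2))" and ft: "f t1 = t2"
    and lab: "\<forall>u \<in> insert t1 (dom par1). evlog (f u) = evlog u"
    and fp: "\<forall>u \<in> dom par1. par2 (f u) = map_option f (par1 u)"
    unfolding wt_iso_def by blast
  obtain dep1 where w1: "wt_proc evlog t1 1 par1 dep1" using assms(8) unfolding witness_tree_def by blast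
  obtain dep2 where w2: "wt_proc evlog t2 1 par2 dep2" using assms(9) unfolding witness_tree_def by blast
  note i1 = wt_inv[OF w1] and i2 = wt_inv[OF w2]
  define N1 where "N1 = insert t1 (dom par1)"
  define N2 where "N2 = insert t2 (dom par2)"
  have N1sub: "N1 \<subseteq> {1..t1}" using i1 assms(5) unfolding N1_def by auto
  have N2sub: "N2 \<subseteq> {1..t2}" using i2 assms(5,6) unfolding N2_def by auto
  have t1n: "t1 \<notin> dom par1" and t2n: "t2 \<notin> dom par2" using i1 i2 by auto
  have inj: "inj_on f N1" using bij unfolding N1_def bij_betw_def by auto
  have img: "f ` N1 = N2" using bij unfolding N1_def N2_def bij_betw_def by auto
  have a1: "dep1 t1 = 0" and a2: "\<forall>u w. par1 u = Some w \<longrightarrow> dep1 u = Suc (dep1 w) \<and> w \<in> insert t1 (dom par1)"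
    and a3: "dep2 t2 = 0" and a4: "\<forall>u w. par2 u = Some w \<longrightarrow> dep2 u = Suc (dep2 w)"
    using i1 i2 by auto
  have dp: "\<And>u. u \<in> N1 \<Longrightarrow> dep2 (f u) = dep1 u"
    using iso_dep[OF a1 a2 a3 a4 ft fp] unfolding N1_def by blast
  define S where "S = {u \<in> N1. f u \<noteq> u}"
  have "t1 \<in> S" using ft assms(6) unfolding S_def N1_def by auto
  have finS: "finite S" proof -
    have "S \<subseteq> {1..t1}" using N1sub unfolding S_def by auto
    then show ?thesis using finite_subset by blast
  qed
  define m where "m = Max (dep1 ` S)"
  have "m \<in> dep1 ` S" unfolding m_def using finS \<open>t1 \<in> S\<close> by (intro Max_in) auto
  then obtain u where uS: "u \<in> S" and um: "dep1 u = m" by auto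
  have umax: "\<forall>x\<in>S. dep1 x \<le> dep1 u" using um finS unfolding m_def by auto
  have uN1: "u \<in> N1" and fu: "f u \<noteq> u" using uS unfolding S_def by auto
  define v where "v = f u"
  have vN2: "v \<in> N2" using img uN1 unfolding v_def by auto
  have labuv: "evlog u = evlog v" using lab uN1 unfolding v_def N1_def by auto
  have fix_deep: "\<And>x. x \<in> N1 \<Longrightarrow> dep1 u < dep1 x \<Longrightarrow> f x = x"
    using umax unfolding S_def by force
  have ch1: "\<And>c. par1 c = Some u \<Longrightarrow> par2 c = Some v \<and> c < u"
  proof -
    fix c assume pc: "par1 c = Some u"
    have cN: "c \<in> N1" using pc unfolding N1_def by auto
    have "dep1 c = Suc (dep1 u)" "c < u" using i1 pc by auto
    then have "f c = c" using fix_deep cN by auto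
    moreover have "par2 (f c) = Some (f u)" using fp pc by (simp add: domI)
    ultimately show "par2 c = Some v \<and> c < u" using \<open>c < u\<close> unfolding v_def by auto
  qed
  have ch2: "\<And>c. par2 c = Some v \<Longrightarrow> par1 c = Some u \<and> c < v"
  proof -
    fix c assume pc: "par2 c = Some v"
    have "c \<in> N2" using pc unfolding N2_def by auto
    then obtain c' where c': "c' \<in> N1" "f c' = c" using img by auto
    have "c \<noteq> t2" using pc t2n by auto
    then have "c' \<noteq> t1" using c' ft by auto
    then have "c' \<in> dom par1" using c' unfolding N1_def by auto
    then obtain w where w: "par1 c' = Some w" by auto
    have wN: "w \<in> N1" using i1 w unfolding N1_def by auto
    have "par2 c = Some (f w)" using fp w c'(2) \<open>c' \<in> dom par1\<close> by force
    then have "f w = f u" using pc unfolding v_def by auto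
    then have "w = u" using inj wN uN1 by (meson inj_onD)
    have "dep1 c' = Suc (dep1 u)" using i1 w \<open>w = u\<close> by auto
    then have "f c' = c'" using fix_deep c' by auto
    then have "c = c'" using c' by auto
    moreover have "c < v" using i2 pc by auto
    ultimately show "par1 c = Some u \<and> c < v" using w \<open>w = u\<close> by auto
  qed
  have "u < v \<or> v < u" using fu unfolding v_def by auto
  then show False
  proof
    assume uv: "u < v"
    have "1 \<le> u" using uN1 N1sub by auto
    moreover have "\<forall>c. par2 c = Some v \<longrightarrow> c < u" using ch2 ch1 by blast
    ultimately have "u \<in> dom par2 \<and> dep2 v < dep2 u"
      using key[OF w2, of u v] uv vN2 labuv unfolding N2_def by auto
    then have "u \<in> N2" unfolding N2_def by auto
    then obtain u' where u': "u' \<in> N1" "f u' = u" using img by auto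
    have "dep1 u' = dep2 u" using dp u' by auto
    moreover have "dep2 v = dep1 u" using dp uN1 unfolding v_def by auto
    ultimately have "dep1 u < dep1 u'" using \<open>u \<in> dom par2 \<and> dep2 v < dep2 u\<close> by auto
    then have "f u' = u'" using fix_deep u' by auto
    then have "u' = u" using u' by auto
    then show False using \<open>dep1 u < dep1 u'\<close> by auto
  next
    assume vu: "v < u"
    have "1 \<le> v" using vN2 N2sub by auto
    moreover have "\<forall>c. par1 c = Some u \<longrightarrow> c < v" using ch2 ch1 by blast
    ultimately have "v \<in> dom par1 \<and> dep1 u < dep1 v"
      using key[OF w1, of v u] vu uN1 labuv unfolding N1_def by auto
    then have vN1: "v \<in> N1" unfolding N1_def by auto
    then have "f v = v" using fix_deep \<open>v \<in> dom par1 \<and> dep1 u < dep1 v\<close> by auto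
    then have "dep2 v = dep1 v" using dp vN1 by metis
    moreover have "dep2 v = dep1 u" using dp uN1 unfolding v_def by auto
    ultimately show False using \<open>v \<in> dom par1 \<and> dep1 u < dep1 v\<close> by auto
  qed
qed

end
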